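(* Let $X \subset Y \subset \mathbb{R}^{n}$ be finite sets, let $k \geq 0$ be an integer and $r > 0$, and suppose that $X^{k+1}_{dis}$ is $r$-dense in $Y^{k+1}_{dis}$. Let $0 = s_{0} < s_{1} < \dots < s_{m}$ be the phase-change numbers of $Y$, and let $0 \le i < m$ be such that $2r < s_{i+1} - s_{i}$. Then the inclusion $i: L_{s_{i},k}(X) \to L_{s_{i},k}(Y)$ is a weak homotopy equivalence.
   Context: $\mathbb{R}^n$ carries the Euclidean metric $d$. For subsets $A \subset B$ of a metric space and $r>0$, $A$ is $r$-dense in $B$ if for every $b \in B$ there is an $a \in A$ with $d(a,b) < r$. For a finite $X \subset \mathbb{R}^n$ and $s \ge 0$, $V_{s}(X)$ is the Vietoris–Rips complex: vertex set $X$, simplices the nonempty subsets $\{x_0,\dots,x_p\}$ with $d(x_i,x_j) \le s$ for all $i,j$. For an integer $k \geq 0$, the Lesnick complex $L_{s,k}(X)$ is the full subcomplex of $V_{s}(X)$ on the set of vertices $x \in X$ for which there exist at least $k$ points $x' \in X$, distinct from $x$, with $d(x,x') \leq s$. $X^{k+1}_{dis}$ denotes the set of ordered $(k+1)$-tuples of pairwise distinct points of $X$, regarded as a subset of $\mathbb{R}^{n(k+1)}$ with its Euclidean metric. The phase-change numbers of $Y$ are the distinct values of $d(y,y')$, $y,y' \in Y$, listed as $0 = s_{0} < \dots < s_{m}$. A simplicial map is a weak homotopy equivalence if its geometric realization is a homotopy equivalence. *)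

theory Defs
  imports "HOL-Analysis.Analysis"
begin

text \<open>Abstract simplicial complexes are represented as sets of (finite, nonempty) vertex sets.\<close>

definition vietoris_rips :: "real \<Rightarrow> 'a::metric_space set \<Rightarrow> 'a set set" where
  "vietoris_rips s X = {\<sigma>. \<sigma> \<noteq> {} \<and> finite \<sigma> \<and> \<sigma> \<subseteq> X \<and> (\<forall>x\<in>\<sigma>. \<forall>y\<in>\<sigma>. dist x y \<le> s)}"

definition lesnick_vertices :: "real \<Rightarrow> nat \<Rightarrow> 'a::metric_space set \<Rightarrow> 'a set" where
  "lesnick_vertices s k X = {x \<in> X. k \<le> card {x' \<in> X. x' \<noteq> x \<and> dist x x' \<le> s}}"

definition lesnick :: "real \<Rightarrow> nat \<Rightarrow> 'a::metric_space set \<Rightarrow> 'a set set" where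
  "lesnick s k X = {\<sigma> \<in> vietoris_rips s X. \<sigma> \<subseteq> lesnick_vertices s k X}"

text \<open>Geometric realization: barycentric coordinate functions whose support is a simplex,
  with the topology induced from the product topology on functions.\<close>
definition realization_set :: "'a set set \<Rightarrow> ('a \<Rightarrow> real) set" where
  "realization_set K = {t. (\<forall>v. 0 \<le> t v) \<and> {v. t v \<noteq> 0} \<in> K \<and> sum t {v. t v \<noteq> 0} = 1}"

definition realization :: "'a set set \<Rightarrow> ('a \<Rightarrow> real) topology" where
  "realization K = subtopology (powertop_real UNIV) (realization_set K)"

definition realization_map :: "('a \<Rightarrow> 'b) \<Rightarrow> ('a \<Rightarrow> real) \<Rightarrow> ('b \<Rightarrow> real)" where
  "realization_map \<phi> t = (\<lambda>w. \<Sum>v\<in>{v. t v \<noteq> 0 \<and> \<phi> v = w}. t v)"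

definition homotopy_equivalence_map :: "'a topology \<Rightarrow> 'b topology \<Rightarrow> ('a \<Rightarrow> 'b) \<Rightarrow> bool" where
  "homotopy_equivalence_map S T f \<longleftrightarrow>
     continuous_map S T f \<and>
     (\<exists>g. continuous_map T S g \<and>
          homotopic_with (\<lambda>x. True) S S (g \<circ> f) id \<and>
          homotopic_with (\<lambda>x. True) T T (f \<circ> g) id)"

definition weak_homotopy_equivalence :: "'a set set \<Rightarrow> 'b set set \<Rightarrow> ('a \<Rightarrow> 'b) \<Rightarrow> bool" where
  "weak_homotopy_equivalence K L \<phi> \<longleftrightarrow>
     (\<forall>\<sigma>\<in>K. \<phi> ` \<sigma> \<in> L) \<and>
     homotopy_equivalence_map (realization K) (realization L) (realization_map \<phi>)"

text \<open>Ordered (k+1)-tuples of pairwise distinct points, as lists, and the Euclidean metric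
  of the product space.\<close>
definition dis_tuples :: "nat \<Rightarrow> 'a set \<Rightarrow> 'a list set" where
  "dis_tuples k X = {xs. length xs = k + 1 \<and> distinct xs \<and> set xs \<subseteq> X}"

definition tuple_dist :: "('a::euclidean_space) list \<Rightarrow> 'a list \<Rightarrow> real" where
  "tuple_dist xs ys = sqrt (\<Sum>i<length xs. (dist (xs ! i) (ys ! i))\<^sup>2)"

definition tuple_r_dense :: "real \<Rightarrow> ('a::euclidean_space) list set \<Rightarrow> 'a list set \<Rightarrow> bool" where
  "tuple_r_dense r A B \<longleftrightarrow> A \<subseteq> B \<and> (\<forall>b\<in>B. \<exists>a\<in>A. tuple_dist a b < r)"

definition phase_change_numbers :: "('a::metric_space) set \<Rightarrow> nat \<Rightarrow> (nat \<Rightarrow> real) \<Rightarrow> bool" where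
  "phase_change_numbers Y m s \<longleftrightarrow>
     strict_mono_on {..m} s \<and> s ` {..m} = {dist y y' | y y'. y \<in> Y \<and> y' \<in> Y}"

end

theory Submission
  imports Defs
begin


lemma rs_basic:
  assumes "t \<in> realization_set K"
  shows "\<And>v. 0 \<le> t v" "{v. t v \<noteq> 0} \<in> K" "sum t {v. t v \<noteq> 0} = 1"
  using assms by (auto simp: realization_set_def)

lemma rm_eq:
  assumes "t \<in> realization_set K" "\<forall>\<sigma>\<in>K. \<sigma> \<subseteq> W" "finite W"
  shows "realization_map \<phi> t w = (\<Sum>v\<in>{v\<in>W. \<phi> v = w}. t v)"
  unfolding realization_map_def
proof (rule sum.mono_neutral_left)
  show "finite {v \<in> W. \<phi> v = w}" using assms by auto
  show "{v. t v \<noteq> 0 \<and> \<phi> v = w} \<subseteq> {v \<in> W. \<phi> v = w}"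
    using assms(1,2) by (auto simp: realization_set_def)
qed auto

lemma rm_id: "realization_map id = id"
proof (rule ext, rule ext)
  fix t :: "'a \<Rightarrow> real" and w
  show "realization_map id t w = id t w"
  proof (cases "t w = 0")
    case True
    then have "{v. t v \<noteq> 0 \<and> id v = w} = {}" by auto
    then show ?thesis using True by (simp add: realization_map_def)
  next
    case False
    then have "{v. t v \<noteq> 0 \<and> id v = w} = {w}" by auto
    then show ?thesis by (simp add: realization_map_def)
  qed
qed

lemma rm_supp:
  assumes t: "t \<in> realization_set K" and fin: "\<forall>\<sigma>\<in>K. finite \<sigma>"
  shows "{w. realization_map \<phi> t w \<noteq> 0} = \<phi> ` {v. t v \<noteq> 0}"
    "sum (realization_map \<phi> t) (\<phi> ` {v. t v \<noteq> 0}) = 1"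
    "\<And>w. 0 \<le> realization_map \<phi> t w"
proof -
  define S where "S = {v. t v \<noteq> 0}"
  have SK: "S \<in> K" and fS: "finite S" and pos: "\<And>v. v \<in> S \<Longrightarrow> 0 < t v"
    and nn: "\<And>v. 0 \<le> t v" and s1: "sum t S = 1"
    using t fin unfolding S_def realization_set_def by (auto simp: order_less_le)
  have rm: "realization_map \<phi> t w = sum t {x. x \<in> S \<and> \<phi> x = w}" for w
    unfolding realization_map_def S_def by (rule sum.cong) auto
  show supp: "{w. realization_map \<phi> t w \<noteq> 0} = \<phi> ` {v. t v \<noteq> 0}"
    unfolding S_def[symmetric]
  proof (intro set_eqI iffI)
    fix w assume "w \<in> {w. realization_map \<phi> t w \<noteq> 0}"
    then have "sum t {x. x \<in> S \<and> \<phi> x = w} \<noteq> 0" using rm[of w] by simp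
    then have "{x. x \<in> S \<and> \<phi> x = w} \<noteq> {}" by (metis sum.empty)
    then show "w \<in> \<phi> ` S" by auto
  next
    fix w assume "w \<in> \<phi> ` S"
    then obtain x where x: "x \<in> S" "\<phi> x = w" by auto
    have "0 < sum t {x. x \<in> S \<and> \<phi> x = w}"
      by (rule sum_pos2[of _ x]) (use fS x pos nn in auto)
    then show "w \<in> {w. realization_map \<phi> t w \<noteq> 0}" using rm[of w] by auto
  qed
  have "sum (realization_map \<phi> t) (\<phi> ` S) = sum t S"
    unfolding rm using sum.image_gen[OF fS, of t \<phi>] by simp
  then show "sum (realization_map \<phi> t) (\<phi> ` {v. t v \<noteq> 0}) = 1" using s1 S_def by simp
  show "\<And>w. 0 \<le> realization_map \<phi> t w" using nn by (auto simp: rm intro!: sum_nonneg)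
qed

lemma rm_in:
  assumes t: "t \<in> realization_set K" and fin: "\<forall>\<sigma>\<in>K. finite \<sigma>"
    and img: "\<forall>\<sigma>\<in>K. \<phi> ` \<sigma> \<in> L"
  shows "realization_map \<phi> t \<in> realization_set L"
  using rm_supp[OF t fin, of \<phi>] img rs_basic[OF t] unfolding realization_set_def by auto

lemma topspace_real[simp]: "topspace (realization K) = realization_set K"
  by (simp add: realization_def)

lemma rm_cont:
  assumes fin: "\<forall>\<sigma>\<in>K. \<sigma> \<subseteq> W" "finite W"
    and img: "\<forall>\<sigma>\<in>K. \<phi> ` \<sigma> \<in> L"
  shows "continuous_map (realization K) (realization L) (realization_map \<phi>)"
proof -
  have f2: "\<forall>\<sigma>\<in>K. finite \<sigma>" using fin finite_subset by blast
  have c: "continuous_map (realization K) (powertop_real UNIV) (\<lambda>t w. (\<Sum>v\<in>{v\<in>W. \<phi> v = w}. t v))"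
    unfolding continuous_map_componentwise_UNIV realization_def
  proof
    fix w
    have p: "continuous_map (subtopology (powertop_real UNIV) (realization_set K)) euclideanreal (\<lambda>x. x v)" for v
      by (rule continuous_map_from_subtopology[OF continuous_map_product_projection]) simp
    show "continuous_map (subtopology (powertop_real UNIV) (realization_set K)) euclideanreal
          (\<lambda>x. \<Sum>v\<in>{v\<in>W. \<phi> v = w}. x v)"
      by (rule continuous_map_sum) (use fin(2) p in auto)
  qed
  have "continuous_map (realization K) (powertop_real UNIV) (realization_map \<phi>)"
  proof (rule continuous_map_eq[OF c])
    fix x assume "x \<in> topspace (realization K)"
    then have "x \<in> realization_set K" by simp
    from rm_eq[OF this fin] show "(\<lambda>w. \<Sum>v\<in>{v\<in>W. \<phi> v = w}. x v) = realization_map \<phi> x"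
      by (intro ext) (rule rm_eq[OF \<open>x \<in> realization_set K\<close> fin, symmetric])
  qed
  moreover have "realization_map \<phi> \<in> topspace (realization K) \<rightarrow> realization_set L"
    unfolding topspace_real Pi_iff using rm_in[OF _ f2 img] by blast
  ultimately have "continuous_map (realization K) (subtopology (powertop_real UNIV) (realization_set L)) (realization_map \<phi>)"
    by (simp only: continuous_map_in_subtopology)
  then show ?thesis by (simp only: realization_def)
qed

lemma homot_comp_cont:
  assumes "finite W"
  shows "continuous_map (prod_topology (top_of_set {0..1::real}) (subtopology (powertop_real UNIV) A)) euclideanreal
      (\<lambda>x. (1 - fst x) * (\<Sum>v\<in>{v\<in>W. \<phi> v = w}. snd x v) + fst x * snd x w)"
proof -
  let ?P = "prod_topology (top_of_set {0..1::real}) (subtopology (powertop_real UNIV) A)"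
  have f0: "continuous_map ?P (top_of_set {0..1::real}) fst" by (rule continuous_map_fst)
  have f: "continuous_map ?P euclideanreal fst"
    using f0 unfolding continuous_map_in_subtopology by (rule conjunct1)
  have s0: "continuous_map ?P (subtopology (powertop_real UNIV) A) snd" by (rule continuous_map_snd)
  have s1: "continuous_map ?P (powertop_real UNIV) snd"
    using s0 unfolding continuous_map_in_subtopology by (rule conjunct1)
  have p: "continuous_map ?P euclideanreal (\<lambda>x. snd x v)" for v
  proof -
    have "continuous_map ?P euclideanreal ((\<lambda>y. y v) \<circ> snd)"
      by (rule continuous_map_compose[OF s1 continuous_map_product_projection]) (rule UNIV_I)
    then show ?thesis by (simp add: o_def)
  qed
  have c1: "continuous_map ?P euclideanreal (\<lambda>x. 1 - fst x)"
    by (rule continuous_map_diff[OF continuous_map_canonical_const f])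
  have c2: "continuous_map ?P euclideanreal (\<lambda>x. \<Sum>v\<in>{v\<in>W. \<phi> v = w}. snd x v)"
    by (rule continuous_map_sum) (use assms p in auto)
  show ?thesis
    by (rule continuous_map_add[OF continuous_map_real_mult[OF c1 c2] continuous_map_real_mult[OF f p]])
qed

lemma rm_homot:
  assumes fin: "\<forall>\<sigma>\<in>K. \<sigma> \<subseteq> W" "finite W"
    and img: "\<forall>\<sigma>\<in>K. \<sigma> \<union> \<phi> ` \<sigma> \<in> K"
    and down: "\<forall>\<sigma>\<in>K. \<forall>\<tau>. \<tau> \<noteq> {} \<and> \<tau> \<subseteq> \<sigma> \<longrightarrow> \<tau> \<in> K"
  shows "homotopic_with (\<lambda>x. True) (realization K) (realization K) (realization_map \<phi>) id"
proof -
  have f2: "\<forall>\<sigma>\<in>K. finite \<sigma>" using fin finite_subset by blast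
  define H where "H = (\<lambda>(l::real,t). \<lambda>w. (1-l) * realization_map \<phi> t w + l * t w)"
  have inK: "H (l,t) \<in> realization_set K" if l: "l \<in> {0..1}" and t: "t \<in> realization_set K" for l t
  proof -
    define S where "S = {v. t v \<noteq> 0}"
    have SK: "S \<in> K" and fS: "finite S" and nn: "\<And>v. 0 \<le> t v" and s1: "sum t S = 1"
      using rs_basic[OF t] f2 unfolding S_def by auto
    note R = rm_supp[OF t f2, of \<phi>, folded S_def]
    define U where "U = S \<union> \<phi> ` S"
    have UK: "U \<in> K" using img SK U_def by auto
    have fU: "finite U" using fS U_def by auto
    have nnH: "0 \<le> H (l,t) w" for w using l nn R(3)[of w] by (auto simp: H_def)
    have suppU: "{w. H (l,t) w \<noteq> 0} \<subseteq> U"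
      using R(1) by (auto simp: H_def U_def S_def)
    have "sum (H (l,t)) {w. H (l,t) w \<noteq> 0} = sum (H (l,t)) U"
      by (rule sum.mono_neutral_left[OF fU suppU]) auto
    also have "\<dots> = (1-l) * sum (realization_map \<phi> t) U + l * sum t U"
      by (simp add: H_def sum.distrib sum_distrib_left)
    also have "sum (realization_map \<phi> t) U = sum (realization_map \<phi> t) (\<phi> ` S)"
      by (rule sum.mono_neutral_right) (use fU R(1) in \<open>auto simp: U_def\<close>)
    also have "sum t U = sum t S"
      by (rule sum.mono_neutral_right) (use fU in \<open>auto simp: U_def S_def\<close>)
    finally have sH: "sum (H (l,t)) {w. H (l,t) w \<noteq> 0} = 1" using R(2) s1 by simp
    then have "{w. H (l,t) w \<noteq> 0} \<noteq> {}" by (metis sum.empty zero_neq_one)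
    moreover have "\<forall>\<tau>. \<tau> \<noteq> {} \<and> \<tau> \<subseteq> U \<longrightarrow> \<tau> \<in> K" using down UK by blast
    ultimately have "{w. H (l,t) w \<noteq> 0} \<in> K" using suppU by simp
    then show ?thesis using sH nnH unfolding realization_set_def by auto
  qed
  have c: "continuous_map (prod_topology (top_of_set {0..1::real}) (realization K)) (powertop_real UNIV)
      (\<lambda>x w. (1 - fst x) * (\<Sum>v\<in>{v\<in>W. \<phi> v = w}. snd x v) + fst x * snd x w)"
    unfolding continuous_map_componentwise_UNIV realization_def
    using homot_comp_cont[OF fin(2)] by blast
  have "continuous_map (prod_topology (top_of_set {0..1::real}) (realization K)) (powertop_real UNIV) H"
  proof (rule continuous_map_eq[OF c])
    fix x assume "x \<in> topspace (prod_topology (top_of_set {0..1::real}) (realization K))"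
    then have "snd x \<in> realization_set K" by auto
    note sx = this
    show "(\<lambda>w. (1 - fst x) * (\<Sum>v\<in>{v\<in>W. \<phi> v = w}. snd x v) + fst x * snd x w) = H x"
    proof (rule ext)
      fix w
      have e1: "realization_map \<phi> (snd x) w = (\<Sum>v\<in>{v\<in>W. \<phi> v = w}. snd x v)"
        by (rule rm_eq[OF sx fin])
      have e2: "H x w = (1 - fst x) * realization_map \<phi> (snd x) w + fst x * snd x w"
        unfolding H_def by (simp add: case_prod_beta)
      show "(1 - fst x) * (\<Sum>v\<in>{v\<in>W. \<phi> v = w}. snd x v) + fst x * snd x w = H x w"
        unfolding e2 e1 ..
    qed
  qed
  moreover have "H \<in> topspace (prod_topology (top_of_set {0..1::real}) (realization K)) \<rightarrow> realization_set K"
  proof -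
    have tp: "topspace (prod_topology (top_of_set {0..1::real}) (realization K)) = {0..1} \<times> realization_set K"
      by simp
    show ?thesis unfolding tp Pi_iff using inK by blast
  qed
  ultimately have "continuous_map (prod_topology (top_of_set {0..1::real}) (realization K)) (subtopology (powertop_real UNIV) (realization_set K)) H"
    by (simp only: continuous_map_in_subtopology)
  then have cH: "continuous_map (prod_topology (top_of_set {0..1::real}) (realization K)) (realization K) H"
    by (simp only: realization_def)
  have H0: "\<forall>t. H (0,t) = realization_map \<phi> t" and H1: "\<forall>t. H (1,t) = id t"
    unfolding H_def by simp_all
  have "continuous_map (prod_topology (top_of_set {0..1::real}) (realization K)) (realization K) H \<and>
       (\<forall>x. H (0, x) = realization_map \<phi> x) \<and> (\<forall>x. H (1, x) = id x) \<and> (\<forall>t\<in>{0..1::real}. True)"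
    using cH H0 H1 by simp
  then show ?thesis unfolding homotopic_with_def by (rule exI[of _ H])
qed



lemma tuple_close:
  assumes "tuple_dist xs ys < r" "j < length xs"
  shows "dist (xs ! j) (ys ! j) < r"
proof -
  have "(dist (xs ! j) (ys ! j))\<^sup>2 \<le> (\<Sum>i<length xs. (dist (xs ! i) (ys ! i))\<^sup>2)"
    by (rule member_le_sum) (use assms in auto)
  then have "sqrt ((dist (xs ! j) (ys ! j))\<^sup>2) \<le> tuple_dist xs ys"
    unfolding tuple_dist_def by (rule real_sqrt_le_mono)
  then show ?thesis using assms(1) by simp
qed

lemma exists_near:
  fixes X Y :: "('a::euclidean_space) set"
  assumes fX: "finite X" and fY: "finite Y" and XY: "X \<subseteq> Y"
    and dense: "tuple_r_dense r (dis_tuples k X) (dis_tuples k Y)"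
    and gap: "\<forall>a\<in>Y. \<forall>b\<in>Y. dist a b < s + 2 * r \<longrightarrow> dist a b \<le> s"
    and y: "y \<in> lesnick_vertices s k Y"
  shows "\<exists>x\<in>lesnick_vertices s k X. dist x y < r"
proof -
  define N where "N = {y'\<in>Y. y' \<noteq> y \<and> dist y y' \<le> s}"
  have yY: "y \<in> Y" and kN: "k \<le> card N" using y unfolding lesnick_vertices_def N_def by auto
  have fN: "finite N" using fY N_def by auto
  obtain A where AN: "A \<subseteq> N" and cA: "card A = k"
    using obtain_subset_with_card_n[OF kN] by metis
  have fA: "finite A" using AN fN finite_subset by blast
  obtain zs where zs: "set zs = A" "distinct zs" using finite_distinct_list[OF fA] by blast
  have lzs: "length zs = k" using zs cA distinct_card by metis
  have "y # zs \<in> dis_tuples k Y"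
    using zs lzs AN yY unfolding dis_tuples_def N_def by auto
  then obtain xs where xs: "xs \<in> dis_tuples k X" and td: "tuple_dist xs (y # zs) < r"
    using dense unfolding tuple_r_dense_def by blast
  have lxs: "length xs = Suc k" using xs unfolding dis_tuples_def by simp
  then obtain x0 xt where xe: "xs = x0 # xt" by (cases xs) auto
  have lxt: "length xt = k" using lxs xe by simp
  have dxt: "distinct (x0 # xt)" and sX: "set (x0 # xt) \<subseteq> X"
    using xs xe unfolding dis_tuples_def by auto
  have cl: "dist (xs ! j) ((y # zs) ! j) < r" if "j < Suc k" for j
    using tuple_close[OF td] that lxs by simp
  have d0: "dist x0 y < r" using cl[of 0] xe by simp
  have sub: "set xt \<subseteq> {x'\<in>X. x' \<noteq> x0 \<and> dist x0 x' \<le> s}"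
  proof
    fix x' assume x': "x' \<in> set xt"
    then obtain j where j: "j < k" "xt ! j = x'" using lxt by (metis in_set_conv_nth)
    have d1: "dist x' (zs ! j) < r" using cl[of "Suc j"] j xe by simp
    have zA: "zs ! j \<in> A" using zs j lzs by auto
    then have d2: "dist y (zs ! j) \<le> s" using AN N_def by auto
    have "dist x0 x' \<le> dist x0 y + dist y (zs ! j) + dist (zs ! j) x'"
      by (metis dist_triangle add.commute add_left_mono order_trans)
    also have "\<dots> < s + 2 * r" using d0 d1 d2 by (simp add: dist_commute)
    finally have "dist x0 x' < s + 2 * r" .
    moreover have "x0 \<in> Y" "x' \<in> Y" using sX x' XY by auto
    ultimately have "dist x0 x' \<le> s" using gap by blast
    moreover have "x' \<noteq> x0" using dxt x' by auto
    moreover have "x' \<in> X" using sX x' by auto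
    ultimately show "x' \<in> {x'\<in>X. x' \<noteq> x0 \<and> dist x0 x' \<le> s}" by simp
  qed
  have "k = card (set xt)" using lxt dxt by (simp add: distinct_card)
  also have "\<dots> \<le> card {x'\<in>X. x' \<noteq> x0 \<and> dist x0 x' \<le> s}"
    by (rule card_mono) (use fX sub in auto)
  finally have "x0 \<in> lesnick_vertices s k X" using sX unfolding lesnick_vertices_def by simp
  then show ?thesis using d0 by blast
qed


lemma lesnick_mem:
  "\<sigma> \<in> lesnick s k Z \<longleftrightarrow> \<sigma> \<noteq> {} \<and> finite \<sigma> \<and> \<sigma> \<subseteq> Z \<and> (\<forall>x\<in>\<sigma>. \<forall>y\<in>\<sigma>. dist x y \<le> s) \<and> \<sigma> \<subseteq> lesnick_vertices s k Z"
  unfolding lesnick_def vietoris_rips_def by auto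

lemma lv_sub: "lesnick_vertices s k Z \<subseteq> Z"
  unfolding lesnick_vertices_def by auto

lemma lv_mono:
  assumes "finite Y" "X \<subseteq> Y"
  shows "lesnick_vertices s k X \<subseteq> lesnick_vertices s k Y"
proof
  fix x assume x: "x \<in> lesnick_vertices s k X"
  have "k \<le> card {x' \<in> X. x' \<noteq> x \<and> dist x x' \<le> s}" using x unfolding lesnick_vertices_def by simp
  also have "\<dots> \<le> card {x' \<in> Y. x' \<noteq> x \<and> dist x x' \<le> s}"
    by (rule card_mono) (use assms in auto)
  finally show "x \<in> lesnick_vertices s k Y" using x assms unfolding lesnick_vertices_def by auto
qed

lemma lesnick_down: "\<forall>\<sigma>\<in>lesnick s k Z. \<forall>\<tau>. \<tau> \<noteq> {} \<and> \<tau> \<subseteq> \<sigma> \<longrightarrow> \<tau> \<in> lesnick s k Z"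
proof (intro ballI allI impI)
  fix \<sigma> \<tau> assume s: "\<sigma> \<in> lesnick s k Z" and t: "\<tau> \<noteq> {} \<and> \<tau> \<subseteq> \<sigma>"
  have sl: "\<sigma> \<noteq> {}" "finite \<sigma>" "\<sigma> \<subseteq> Z" "\<forall>x\<in>\<sigma>. \<forall>y\<in>\<sigma>. dist x y \<le> s" "\<sigma> \<subseteq> lesnick_vertices s k Z"
    using s unfolding lesnick_mem by blast+
  have "finite \<tau>" using t sl(2) finite_subset by blast
  moreover have "\<tau> \<subseteq> Z" using t sl(3) by blast
  moreover have "\<forall>x\<in>\<tau>. \<forall>y\<in>\<tau>. dist x y \<le> s" using t sl(4) by blast
  moreover have "\<tau> \<subseteq> lesnick_vertices s k Z" using t sl(5) by blast
  ultimately show "\<tau> \<in> lesnick s k Z" unfolding lesnick_mem using t by blast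
qed

lemma lesnick_sub: "\<forall>\<sigma>\<in>lesnick s k Z. \<sigma> \<subseteq> Z"
  unfolding lesnick_def vietoris_rips_def by blast

theorem corollary4:
  fixes X Y :: "(real ^ 'n) set" and k :: nat and r :: real
    and m :: nat and s :: "nat \<Rightarrow> real" and i :: nat
  assumes "finite X" and "finite Y" and "X \<subseteq> Y"
    and "r > 0"
    and "tuple_r_dense r (dis_tuples k X) (dis_tuples k Y)"
    and "phase_change_numbers Y m s"
    and "i < m" and "2 * r < s (i + 1) - s i"
  shows "weak_homotopy_equivalence (lesnick (s i) k X) (lesnick (s i) k Y) id"
proof -
  note fX = assms(1) and fY = assms(2) and XY = assms(3) and r0 = assms(4) and dense = assms(5)
  have sm: "strict_mono_on {..m} s" and img: "s ` {..m} = {dist y y' | y y'. y \<in> Y \<and> y' \<in> Y}"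
    using assms(6) unfolding phase_change_numbers_def by auto
  define S0 where "S0 = s i"
  have gap: "\<forall>a\<in>Y. \<forall>b\<in>Y. dist a b < S0 + 2 * r \<longrightarrow> dist a b \<le> S0"
  proof (intro ballI impI)
    fix a b assume a: "a \<in> Y" and b: "b \<in> Y" and d: "dist a b < S0 + 2 * r"
    have "dist a b \<in> s ` {..m}" using img a b by blast
    then obtain j where j: "j \<le> m" "dist a b = s j" by auto
    show "dist a b \<le> S0"
    proof (cases "j \<le> i")
      case True
      then show ?thesis
      proof (cases "j = i")
        case False
        then have "s j < s i" using strict_mono_onD[OF sm, of j i] True assms(7) by auto
        then show ?thesis using j S0_def by simp
      qed (use j S0_def in simp)
    next
      case False
      then have "s (i+1) \<le> s j"
        using strict_mono_onD[OF sm, of "i+1" j] j(1) assms(7)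
        by (cases "j = i + 1") (auto simp: less_imp_le)
      then show ?thesis using j d assms(8) S0_def by simp
    qed
  qed
  define VX where "VX = lesnick_vertices S0 k X"
  define VY where "VY = lesnick_vertices S0 k Y"
  have VXY: "VX \<subseteq> VY" unfolding VX_def VY_def by (rule lv_mono[OF fY XY])
  have VXX: "VX \<subseteq> X" unfolding VX_def by (rule lv_sub)
  have ex: "\<exists>x\<in>VX. dist x y < r" if "y \<in> VY" for y
    unfolding VX_def by (rule exists_near[OF fX fY XY dense gap]) (use that VY_def in simp)
  define p where "p y = (if y \<in> VX then y else (SOME x. x \<in> VX \<and> dist x y < r))" for y
  have P1: "p y \<in> VX \<and> dist (p y) y < r" if "y \<in> VY" for y
  proof (cases "y \<in> VX")
    case True then show ?thesis using r0 p_def by simp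
  next
    case False
    have "\<exists>x. x \<in> VX \<and> dist x y < r" using ex[OF that] by blast
    from someI_ex[OF this] show ?thesis using False p_def by simp
  qed
  have P2: "p x = x" if "x \<in> VX" for x using that p_def by simp
  define LX where "LX = lesnick S0 k X"
  define LY where "LY = lesnick S0 k Y"
  have near: "\<exists>a\<in>\<sigma>. dist u a < r" if "\<sigma> \<in> LY" "u \<in> \<sigma> \<union> p ` \<sigma>" for \<sigma> u
  proof -
    have sV: "\<sigma> \<subseteq> VY" using that(1) unfolding LY_def VY_def lesnick_mem by blast
    from that(2) show ?thesis
    proof
      assume "u \<in> \<sigma>" then show ?thesis using r0 by force
    next
      assume "u \<in> p ` \<sigma>"
      then obtain a where "a \<in> \<sigma>" "u = p a" by auto
      then show ?thesis using P1[of a] sV by auto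
    qed
  qed
  have pw: "dist u v \<le> S0" if s: "\<sigma> \<in> LY" and u: "u \<in> \<sigma> \<union> p ` \<sigma>" and v: "v \<in> \<sigma> \<union> p ` \<sigma>" for \<sigma> u v
  proof -
    have sl: "\<sigma> \<noteq> {} \<and> finite \<sigma> \<and> \<sigma> \<subseteq> Y \<and> (\<forall>x\<in>\<sigma>. \<forall>y\<in>\<sigma>. dist x y \<le> S0) \<and> \<sigma> \<subseteq> VY"
      using s unfolding LY_def VY_def lesnick_mem by blast
    have inY: "\<sigma> \<union> p ` \<sigma> \<subseteq> Y" using sl P1 VXY VXX XY by blast
    obtain a where a: "a \<in> \<sigma>" "dist u a < r" using near[OF s u] by blast
    obtain b where b: "b \<in> \<sigma>" "dist v b < r" using near[OF s v] by blast
    have "dist u v \<le> dist u a + dist a b + dist b v"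
      by (metis dist_triangle add.commute add_left_mono order_trans)
    also have "\<dots> < S0 + 2 * r"
    proof -
      have ab: "dist a b \<le> S0" using sl a(1) b(1) by blast
      have bv: "dist b v < r" using b(2) by (simp add: dist_commute)
      show ?thesis using a(2) ab bv by linarith
    qed
    finally show ?thesis using gap inY u v by blast
  qed
  have cY: "\<forall>\<sigma>\<in>LY. \<sigma> \<union> p ` \<sigma> \<in> LY"
  proof
    fix \<sigma> assume s: "\<sigma> \<in> LY"
    have sl: "\<sigma> \<noteq> {} \<and> finite \<sigma> \<and> \<sigma> \<subseteq> Y \<and> \<sigma> \<subseteq> VY"
      using s unfolding LY_def VY_def lesnick_mem by blast
    have "p ` \<sigma> \<subseteq> VY" using sl P1 VXY by blast
    moreover have "VY \<subseteq> Y" unfolding VY_def by (rule lv_sub)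
    ultimately show "\<sigma> \<union> p ` \<sigma> \<in> LY"
      unfolding LY_def lesnick_mem using sl pw[OF s] VY_def by auto
  qed
  have cYX: "\<forall>\<sigma>\<in>LY. p ` \<sigma> \<in> LX"
  proof
    fix \<sigma> assume s: "\<sigma> \<in> LY"
    have sl: "\<sigma> \<noteq> {} \<and> finite \<sigma> \<and> \<sigma> \<subseteq> Y \<and> \<sigma> \<subseteq> VY"
      using s unfolding LY_def VY_def lesnick_mem by blast
    have "p ` \<sigma> \<subseteq> VX" using sl P1 by blast
    then show "p ` \<sigma> \<in> LX"
      unfolding LX_def lesnick_mem using sl pw[OF s] VX_def VXX by auto
  qed
  have cX: "\<forall>\<sigma>\<in>LX. \<sigma> \<union> p ` \<sigma> \<in> LX"
  proof
    fix \<sigma> assume s: "\<sigma> \<in> LX"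
    have "\<sigma> \<subseteq> VX" using s unfolding LX_def VX_def lesnick_mem by blast
    then have "p ` \<sigma> = \<sigma>" using P2 by (simp add: subset_iff)
    then show "\<sigma> \<union> p ` \<sigma> \<in> LX" using s by simp
  qed
  have cXY: "\<forall>\<sigma>\<in>LX. id ` \<sigma> \<in> LY"
  proof
    fix \<sigma> assume s: "\<sigma> \<in> LX"
    then show "id ` \<sigma> \<in> LY"
      using VXY XY unfolding LX_def LY_def VX_def VY_def lesnick_mem by auto
  qed
  have m1: "continuous_map (realization LX) (realization LY) (realization_map id)"
    by (rule rm_cont[OF _ fX cXY]) (use lesnick_sub LX_def in simp)
  have m2: "continuous_map (realization LY) (realization LX) (realization_map p)"
    by (rule rm_cont[OF _ fY cYX]) (use lesnick_sub LY_def in simp)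
  have h1: "homotopic_with (\<lambda>x. True) (realization LX) (realization LX) (realization_map p) id"
    by (rule rm_homot[OF _ fX cX]) (use lesnick_sub lesnick_down LX_def in simp_all)
  have h2: "homotopic_with (\<lambda>x. True) (realization LY) (realization LY) (realization_map p) id"
    by (rule rm_homot[OF _ fY cY]) (use lesnick_sub lesnick_down LY_def in simp_all)
  have "weak_homotopy_equivalence LX LY id"
    unfolding weak_homotopy_equivalence_def homotopy_equivalence_map_def
  proof (intro conjI exI[of _ "realization_map p"])
    show "\<forall>\<sigma>\<in>LX. id ` \<sigma> \<in> LY" by (rule cXY)
    show "continuous_map (realization LX) (realization LY) (realization_map id)" by (rule m1)
    show "continuous_map (realization LY) (realization LX) (realization_map p)" by (rule m2)
    show "homotopic_with (\<lambda>x. True) (realization LX) (realization LX) (realization_map p \<circ> realization_map id) id"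
      using h1 by (simp add: rm_id)
    show "homotopic_with (\<lambda>x. True) (realization LY) (realization LY) (realization_map id \<circ> realization_map p) id"
      using h2 by (simp add: rm_id)
  qed
  then show ?thesis unfolding LX_def LY_def S0_def .
qed

end
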